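(* Let $\mathcal X=\{1,\ldots,n\}$, $N\ge1$, and let $M=[m_{ij}]$ be an $n\times n$ matrix with nonnegative entries such that all entries of $M^N$ are positive. Let $\lambda_M>0$ be the spectral radius of $M$ (its Perron eigenvalue), and let $\phi,\hat\phi$ be right and left eigenvectors of $M$ for $\lambda_M$ with strictly positive entries ($M\phi=\lambda_M\phi$, $M^T\hat\phi=\lambda_M\hat\phi$), normalized so that $\sum_{x\in\mathcal X}\phi(x)\hat\phi(x)=1$. Define the probability distribution $\bar\nu(x)=\phi(x)\hat\phi(x)$. Let $\mu_0$ be a measure on $\mathcal X$ with $\mu_0(x)>0$ for all $x$, and let $\mathfrak M$ be the measure on $\mathcal X^{N+1}$ given by $\mathfrak M(x_0,\ldots,x_N)=\mu_0(x_0)m_{x_0x_1}\cdots m_{x_{N-1}x_N}$. Then the solution $\mathfrak M^*[\bar\nu,\bar\nu]$ of the problem of minimizing $\mathbb D(P\|\mathfrak M)$ over all probability distributions $P$ on $\mathcal X^{N+1}$ whose marginals at times $0$ and $N$ both equal $\bar\nu$ is a Markov measure with the time-invariant transition matrix $$\bar\Pi=\lambda_M^{-1}\operatorname{diag}(\phi)^{-1}M\operatorname{diag}(\phi),$$ and $\bar\nu$ is an invariant measure of $\bar\Pi$, i.e. $\bar\Pi^T\bar\nu=\bar\nu$.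
   Context: Relative entropy of a probability distribution $P$ with respect to a nonnegative measure $Q$ on a finite set: $\mathbb D(P\|Q)=\sum_x P(x)\log\frac{P(x)}{Q(x)}$ if $\mathrm{supp}(P)\subseteq\mathrm{supp}(Q)$ (with $0\log0=0$), and $+\infty$ otherwise. *)

theory Defs
  imports "HOL-Analysis.Analysis"
begin

(* State space X = a finite type 'a (|X| = n = CARD('a)); matrices X x X are functions 'a => 'a => real. *)

definition matmul :: "('a::finite \<Rightarrow> 'a \<Rightarrow> real) \<Rightarrow> ('a \<Rightarrow> 'a \<Rightarrow> real) \<Rightarrow> 'a \<Rightarrow> 'a \<Rightarrow> real" where
  "matmul A B = (\<lambda>x z. \<Sum>y\<in>UNIV. A x y * B y z)"

fun matpow :: "('a::finite \<Rightarrow> 'a \<Rightarrow> real) \<Rightarrow> nat \<Rightarrow> 'a \<Rightarrow> 'a \<Rightarrow> real" where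
  "matpow A 0 = (\<lambda>x y. if x = y then 1 else 0)"
| "matpow A (Suc k) = matmul (matpow A k) A"

definition spectral_radius :: "('a::finite \<Rightarrow> 'a \<Rightarrow> real) \<Rightarrow> real" where
  "spectral_radius M = Sup {cmod c | c. \<exists>v :: 'a \<Rightarrow> complex. v \<noteq> (\<lambda>_. 0) \<and>
      (\<forall>x. (\<Sum>y\<in>UNIV. complex_of_real (M x y) * v y) = c * v x)}"

definition rel_entropy :: "'b set \<Rightarrow> ('b \<Rightarrow> real) \<Rightarrow> ('b \<Rightarrow> real) \<Rightarrow> ereal" where
  "rel_entropy S P Q =
     (if \<forall>x\<in>S. P x \<noteq> 0 \<longrightarrow> Q x \<noteq> 0
      then ereal (\<Sum>x\<in>S. if P x = 0 then 0 else P x * ln (P x / Q x))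
      else \<infinity>)"

definition paths :: "nat \<Rightarrow> 'a list set" where
  "paths N = {xs. length xs = Suc N}"

definition is_prob_on :: "'b set \<Rightarrow> ('b \<Rightarrow> real) \<Rightarrow> bool" where
  "is_prob_on S P \<longleftrightarrow> (\<forall>x\<in>S. P x \<ge> 0) \<and> (\<Sum>x\<in>S. P x) = 1"

definition marginal :: "nat \<Rightarrow> ('a list \<Rightarrow> real) \<Rightarrow> nat \<Rightarrow> 'a \<Rightarrow> real" where
  "marginal N P t x = (\<Sum>xs\<in>paths N. if xs ! t = x then P xs else 0)"

definition bridge_feasible :: "nat \<Rightarrow> ('a \<Rightarrow> real) \<Rightarrow> ('a \<Rightarrow> real) \<Rightarrow> ('a list \<Rightarrow> real) \<Rightarrow> bool" where
  "bridge_feasible N nu0 nu1 P \<longleftrightarrow> is_prob_on (paths N) P \<and>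
      (\<forall>x. marginal N P 0 x = nu0 x) \<and> (\<forall>x. marginal N P N x = nu1 x)"

definition path_measure :: "('a \<Rightarrow> real) \<Rightarrow> ('a \<Rightarrow> 'a \<Rightarrow> real) \<Rightarrow> nat \<Rightarrow> 'a list \<Rightarrow> real" where
  "path_measure mu0 T N xs = mu0 (xs ! 0) * (\<Prod>k<N. T (xs ! k) (xs ! Suc k))"

end

theory Submission
  imports Defs
begin


lemma finite_paths: "finite (paths n :: ('a::finite) list set)"
  using finite_lists_length_eq[of "UNIV::'a set" "Suc n"] by (simp add: paths_def)

lemma paths_Suc: "paths (Suc n) = (\<lambda>(xs,y). xs @ [y]) ` (paths n \<times> UNIV)"
proof (rule equalityI)
  show "paths (Suc n) \<subseteq> (\<lambda>(xs,y). xs @ [y]) ` (paths n \<times> UNIV)"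
  proof
    fix zs assume z: "zs \<in> paths (Suc n)"
    then have "zs \<noteq> []" by (auto simp: paths_def)
    then have e: "zs = butlast zs @ [last zs]" by simp
    have "butlast zs \<in> paths n" using z by (auto simp: paths_def)
    then show "zs \<in> (\<lambda>(xs,y). xs @ [y]) ` (paths n \<times> UNIV)"
      using e by (intro image_eqI[where x="(butlast zs, last zs)"]) auto
  qed
  show "(\<lambda>(xs,y). xs @ [y]) ` (paths n \<times> UNIV) \<subseteq> paths (Suc n)"
    by (auto simp: paths_def)
qed

lemma sum_paths_Suc:
  fixes F :: "'a list \<Rightarrow> 'b::comm_monoid_add"
  shows "(\<Sum>zs\<in>paths (Suc n). F zs) = (\<Sum>xs\<in>paths n. \<Sum>y\<in>UNIV. F (xs @ [y]))"
proof -
  have inj: "inj_on (\<lambda>(xs,y). xs @ [y]) (paths n \<times> (UNIV::'a set))"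
    by (auto simp: inj_on_def)
  have "(\<Sum>zs\<in>paths (Suc n). F zs) = (\<Sum>p\<in>paths n \<times> UNIV. F ((\<lambda>(xs,y). xs @ [y]) p))"
    unfolding paths_Suc using sum.reindex[OF inj, of F] by (simp add: comp_def)
  also have "\<dots> = (\<Sum>xs\<in>paths n. \<Sum>y\<in>UNIV. F (xs @ [y]))"
    unfolding sum.cartesian_product by (simp add: case_prod_unfold)
  finally show ?thesis .
qed

lemma sum_paths_0: "(\<Sum>zs\<in>paths 0. F zs) = (\<Sum>x\<in>(UNIV::'a::finite set). F [x])"
proof -
  have "paths 0 = (\<lambda>x. [x]) ` (UNIV::'a set)"
    by (auto simp: paths_def length_Suc_conv)
  moreover have "inj (\<lambda>x::'a. [x])" by (auto simp: inj_def)
  ultimately show ?thesis by (simp add: sum.reindex)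
qed

lemma prod_append_last:
  assumes "length xs = Suc n"
  shows "(\<Prod>k<Suc n. T ((xs@[y])!k) ((xs@[y])!Suc k)) = (\<Prod>k<n. T (xs!k) (xs!Suc k)) * T (xs!n) y"
proof -
  have "(\<Prod>k<n. T ((xs@[y])!k) ((xs@[y])!Suc k)) = (\<Prod>k<n. T (xs!k) (xs!Suc k))"
    by (rule prod.cong) (use assms in \<open>auto simp: nth_append\<close>)
  moreover have "(xs@[y])!n = xs!n" "(xs@[y])!Suc n = y" using assms by (auto simp: nth_append)
  ultimately show ?thesis by simp
qed

lemma nth0_append: "length xs = Suc n \<Longrightarrow> (xs@[y])!0 = xs!0"
  by (simp add: nth_append)

lemma sum_paths_stoch:
  fixes T :: "'a::finite \<Rightarrow> 'a \<Rightarrow> real"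
  assumes st: "\<forall>z. (\<Sum>y\<in>UNIV. T z y) = 1"
  shows "(\<Sum>xs\<in>paths n. a (xs!0) * (\<Prod>k<n. T (xs!k) (xs!Suc k))) = (\<Sum>x\<in>UNIV. a x)"
proof (induction n)
  case 0
  then show ?case by (simp add: sum_paths_0)
next
  case (Suc n)
  have "(\<Sum>xs\<in>paths (Suc n). a (xs!0) * (\<Prod>k<Suc n. T (xs!k) (xs!Suc k)))
      = (\<Sum>xs\<in>paths n. \<Sum>y\<in>UNIV. a (xs!0) * (\<Prod>k<n. T (xs!k) (xs!Suc k)) * T (xs!n) y)"
    unfolding sum_paths_Suc
    apply (intro sum.cong refl)
    subgoal for xs y using prod_append_last[of xs n T y] nth0_append[of xs n y]
      by (simp add: paths_def mult.assoc del: prod.lessThan_Suc)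
    done
  also have "\<dots> = (\<Sum>xs\<in>paths n. a (xs!0) * (\<Prod>k<n. T (xs!k) (xs!Suc k)))"
    by (intro sum.cong refl) (simp add: sum_distrib_left[symmetric] st)
  finally show ?case using Suc by simp
qed

lemma sum_paths_inv:
  fixes T :: "'a::finite \<Rightarrow> 'a \<Rightarrow> real"
  assumes inv: "\<forall>y. (\<Sum>x\<in>UNIV. nu x * T x y) = nu y"
  shows "(\<Sum>xs\<in>paths n. nu (xs!0) * (\<Prod>k<n. T (xs!k) (xs!Suc k)) * b (xs!n)) = (\<Sum>x\<in>UNIV. nu x * b x)"
proof (induction n arbitrary: b)
  case 0
  then show ?case by (simp add: sum_paths_0)
next
  case (Suc n)
  have "(\<Sum>xs\<in>paths (Suc n). nu (xs!0) * (\<Prod>k<Suc n. T (xs!k) (xs!Suc k)) * b (xs!Suc n))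
      = (\<Sum>xs\<in>paths n. \<Sum>y\<in>UNIV. nu (xs!0) * (\<Prod>k<n. T (xs!k) (xs!Suc k)) * (T (xs!n) y * b y))"
    unfolding sum_paths_Suc
    apply (intro sum.cong refl)
    subgoal for xs y using prod_append_last[of xs n T y] nth0_append[of xs n y]
      by (simp add: paths_def mult.assoc nth_append del: prod.lessThan_Suc)
    done
  also have "\<dots> = (\<Sum>xs\<in>paths n. nu (xs!0) * (\<Prod>k<n. T (xs!k) (xs!Suc k)) * (\<lambda>z. \<Sum>y\<in>UNIV. T z y * b y) (xs!n))"
    by (intro sum.cong refl) (simp only: sum_distrib_left)
  also have "\<dots> = (\<Sum>z\<in>UNIV. nu z * (\<Sum>y\<in>UNIV. T z y * b y))" by (rule Suc)
  also have "\<dots> = (\<Sum>z\<in>UNIV. \<Sum>y\<in>UNIV. nu z * T z y * b y)"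
    by (simp only: sum_distrib_left mult.assoc)
  also have "\<dots> = (\<Sum>y\<in>UNIV. \<Sum>z\<in>UNIV. nu z * T z y * b y)"
    by (rule sum.swap)
  also have "\<dots> = (\<Sum>y\<in>UNIV. (\<Sum>z\<in>UNIV. nu z * T z y) * b y)"
    by (simp only: sum_distrib_right)
  also have "\<dots> = (\<Sum>y\<in>UNIV. nu y * b y)" using inv by simp
  finally show ?case .
qed

lemma prod_telescope:
  fixes p m :: "nat \<Rightarrow> real"
  assumes a: "\<And>k. p k > 0" and l: "lam > 0"
  shows "(\<Prod>k<n. m k * p (Suc k) / (lam * p k)) = (\<Prod>k<n. m k) * p n / (lam ^ n * p 0)"
proof (induction n)
  case 0 show ?case using a[of 0] by simp
next
  case (Suc n)
  have h: "p 0 \<noteq> 0" "p n \<noteq> 0" "p (Suc n) \<noteq> 0" "lam \<noteq> 0" using a[of 0] a[of n] a[of "Suc n"] l by auto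
  show ?case using Suc.IH h by (simp add: field_simps)
qed

lemma gibbs:
  fixes P Q :: "'b \<Rightarrow> real"
  assumes fin: "finite S" and Pn: "\<forall>x\<in>S. P x \<ge> 0" and Qn: "\<forall>x\<in>S. Q x \<ge> 0"
    and sP: "(\<Sum>x\<in>S. P x) = 1" and sQ: "(\<Sum>x\<in>S. Q x) = 1"
    and ac: "\<forall>x\<in>S. P x \<noteq> 0 \<longrightarrow> Q x \<noteq> 0"
  shows "(\<Sum>x\<in>S. if P x = 0 then 0 else P x * ln (P x / Q x)) \<ge> 0"
    and "(\<Sum>x\<in>S. if P x = 0 then 0 else P x * ln (P x / Q x)) = 0 \<Longrightarrow> \<forall>x\<in>S. P x = Q x"
proof -
  define t where "t x = (if P x = 0 then 0 else P x * ln (P x / Q x))" for x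
  have ge: "t x - (P x - Q x) \<ge> 0" if "x \<in> S" for x
  proof (cases "P x = 0")
    case True then show ?thesis using Qn that by (simp add: t_def)
  next
    case False
    then have p: "P x > 0" and q: "Q x > 0" using Pn Qn ac that by force+
    have "ln (Q x / P x) \<le> Q x / P x - 1" using p q by (intro ln_le_minus_one) simp
    then have "P x * ln (Q x / P x) \<le> P x * (Q x / P x - 1)" using p by (simp add: mult_left_mono)
    moreover have "ln (P x / Q x) = - ln (Q x / P x)" using p q by (simp add: ln_div)
    moreover have "P x * (Q x / P x - 1) = Q x - P x" using p by (simp add: field_simps)
    ultimately show ?thesis using p False by (simp add: t_def)
  qed
  have eq: "(\<Sum>x\<in>S. t x - (P x - Q x)) = (\<Sum>x\<in>S. t x)"
    using sP sQ by (simp add: sum_subtractf)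
  show "(\<Sum>x\<in>S. if P x = 0 then 0 else P x * ln (P x / Q x)) \<ge> 0"
    using sum_nonneg[of S "\<lambda>x. t x - (P x - Q x)"] ge eq by (simp add: t_def)
  assume z: "(\<Sum>x\<in>S. if P x = 0 then 0 else P x * ln (P x / Q x)) = 0"
  then have "(\<Sum>x\<in>S. t x - (P x - Q x)) = 0" using eq by (simp add: t_def)
  then have all0: "\<forall>x\<in>S. t x - (P x - Q x) = 0"
    using ge by (subst (asm) sum_nonneg_eq_0_iff[OF fin]) auto
  show "\<forall>x\<in>S. P x = Q x"
  proof
    fix x assume xS: "x \<in> S"
    show "P x = Q x"
    proof (cases "P x = 0")
      case True then show ?thesis using all0[rule_format, OF xS] by (simp add: t_def)
    next
      case False
      then have p: "P x > 0" and q: "Q x > 0" using Pn Qn ac xS by force+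
      have "P x * ln (P x / Q x) = P x - Q x" using all0[rule_format, OF xS] False by (simp add: t_def)
      moreover have "ln (P x / Q x) = - ln (Q x / P x)" using p q by (simp add: ln_div)
      ultimately have "ln (Q x / P x) = Q x / P x - 1" using p by (simp add: field_simps)
      then have "Q x / P x = 1" using p q by (intro ln_eq_minus_one) auto
      then show ?thesis using p by simp
    qed
  qed
qed


lemma sum_marginal:
  fixes P :: "'a::finite list \<Rightarrow> real"
  shows "(\<Sum>xs\<in>paths N. P xs * f (xs!t)) = (\<Sum>x\<in>UNIV. f x * marginal N P t x)"
proof -
  have "(\<Sum>x\<in>UNIV. f x * marginal N P t x)
      = (\<Sum>x\<in>UNIV. \<Sum>xs\<in>paths N. (if xs!t = x then P xs * f x else 0))"
    unfolding marginal_def by (simp add: sum_distrib_left if_distrib mult.commute cong: if_cong)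
  also have "\<dots> = (\<Sum>xs\<in>paths N. \<Sum>x\<in>UNIV. (if xs!t = x then P xs * f x else 0))"
    by (rule sum.swap)
  also have "\<dots> = (\<Sum>xs\<in>paths N. P xs * f (xs!t))"
    by (simp add: sum.delta)
  finally show ?thesis by simp
qed

theorem proposition3p2:
  fixes M :: "'a::finite \<Rightarrow> 'a \<Rightarrow> real"
    and N :: nat and lam :: real
    and phi phihat mu0 :: "'a \<Rightarrow> real"
  assumes N: "N \<ge> 1"
    and M_nonneg: "\<forall>x y. M x y \<ge> 0"
    and M_prim: "\<forall>x y. matpow M N x y > 0"
    and lam: "lam = spectral_radius M" and lam_pos: "lam > 0"
    and phi_pos: "\<forall>x. phi x > 0" and phihat_pos: "\<forall>x. phihat x > 0"
    and phi_eig: "\<forall>x. (\<Sum>y\<in>UNIV. M x y * phi y) = lam * phi x"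
    and phihat_eig: "\<forall>y. (\<Sum>x\<in>UNIV. M x y * phihat x) = lam * phihat y"
    and norm: "(\<Sum>x\<in>UNIV. phi x * phihat x) = 1"
    and mu0_pos: "\<forall>x. mu0 x > 0"
  defines "nubar \<equiv> (\<lambda>x. phi x * phihat x)"
    and "Pibar \<equiv> (\<lambda>x y. M x y * phi y / (lam * phi x))"
  shows "bridge_feasible N nubar nubar (path_measure nubar Pibar N)
     \<and> (\<forall>P. bridge_feasible N nubar nubar P \<longrightarrow>
           rel_entropy (paths N) (path_measure nubar Pibar N) (path_measure mu0 M N)
             \<le> rel_entropy (paths N) P (path_measure mu0 M N))
     \<and> (\<forall>P. bridge_feasible N nubar nubar P \<and>
           rel_entropy (paths N) P (path_measure mu0 M N)
             = rel_entropy (paths N) (path_measure nubar Pibar N) (path_measure mu0 M N)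
           \<longrightarrow> (\<forall>xs\<in>paths N. P xs = path_measure nubar Pibar N xs))
     \<and> (\<forall>y. (\<Sum>x\<in>UNIV. Pibar x y * nubar x) = nubar y)"
proof -
  define S where "S = (paths N :: 'a list set)"
  define Q where "Q = path_measure nubar Pibar N"
  define R where "R = path_measure mu0 M N"
  have finS: "finite S" unfolding S_def by (rule finite_paths)
  have phin: "phi x \<noteq> 0" for x using phi_pos by (metis less_irrefl)
  have stoch: "\<forall>z. (\<Sum>y\<in>UNIV. Pibar z y) = 1"
  proof
    fix z
    have "(\<Sum>y\<in>UNIV. Pibar z y) = (\<Sum>y\<in>UNIV. M z y * phi y) / (lam * phi z)"
      unfolding Pibar_def by (simp add: sum_divide_distrib)
    also have "\<dots> = 1" using phi_eig phin[of z] lam_pos by simp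
    finally show "(\<Sum>y\<in>UNIV. Pibar z y) = 1" .
  qed
  have inv: "\<forall>y. (\<Sum>x\<in>UNIV. nubar x * Pibar x y) = nubar y"
  proof
    fix y
    have "(\<Sum>x\<in>UNIV. nubar x * Pibar x y) = (\<Sum>x\<in>UNIV. M x y * phihat x) * (phi y / lam)"
      unfolding nubar_def Pibar_def sum_distrib_right
      by (rule sum.cong) (use phin lam_pos in \<open>auto simp: field_simps\<close>)
    also have "\<dots> = nubar y" using phihat_eig lam_pos by (simp add: nubar_def)
    finally show "(\<Sum>x\<in>UNIV. nubar x * Pibar x y) = nubar y" .
  qed
  have part4: "\<forall>y. (\<Sum>x\<in>UNIV. Pibar x y * nubar x) = nubar y"
    using inv by (simp add: mult.commute)
  have Qsum: "(\<Sum>xs\<in>S. Q xs) = 1"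
    using sum_paths_inv[OF inv, of N "\<lambda>_. 1"] norm
    unfolding S_def Q_def path_measure_def nubar_def by simp
  have Pinn: "Pibar x y \<ge> 0" for x y
  proof -
    have "M x y * phi y \<ge> 0" using M_nonneg phi_pos by (simp add: less_imp_le)
    moreover have "lam * phi x > 0" using lam_pos phi_pos by simp
    ultimately show ?thesis unfolding Pibar_def by simp
  qed
  have Qnn: "\<forall>xs. Q xs \<ge> 0"
    unfolding Q_def path_measure_def nubar_def
    apply (intro allI mult_nonneg_nonneg prod_nonneg ballI Pinn)
    using phi_pos phihat_pos by (auto intro: less_imp_le)
  have m0: "marginal N Q 0 x = nubar x" for x
  proof -
    have "marginal N Q 0 x = (\<Sum>xs\<in>paths N. (\<lambda>z. if z = x then nubar z else 0) (xs!0) * (\<Prod>k<N. Pibar (xs!k) (xs!Suc k)))"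
      unfolding marginal_def Q_def path_measure_def by (rule sum.cong) auto
    also have "\<dots> = nubar x" by (subst sum_paths_stoch[OF stoch]) simp
    finally show ?thesis .
  qed
  have mN: "marginal N Q N x = nubar x" for x
  proof -
    have "marginal N Q N x = (\<Sum>xs\<in>paths N. nubar (xs!0) * (\<Prod>k<N. Pibar (xs!k) (xs!Suc k)) * (\<lambda>z. if z = x then 1 else 0) (xs!N))"
      unfolding marginal_def Q_def path_measure_def by (rule sum.cong) auto
    also have "\<dots> = (\<Sum>z\<in>UNIV. nubar z * (if z = x then 1 else 0))" by (rule sum_paths_inv[OF inv])
    also have "\<dots> = (\<Sum>z\<in>UNIV. if z = x then nubar z else 0)" by (rule sum.cong) auto
    also have "\<dots> = nubar x" by simp
    finally show ?thesis .
  qed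
  have feasQ: "bridge_feasible N nubar nubar Q"
    unfolding bridge_feasible_def is_prob_on_def using Qsum Qnn m0 mN by (simp add: S_def)
  define c where "c xs = phihat (xs!0) / (lam ^ N * mu0 (xs!0)) * phi (xs!N)" for xs :: "'a list"
  have cpos: "c xs > 0" for xs
    unfolding c_def using phi_pos phihat_pos mu0_pos lam_pos by simp
  have ratio: "Q xs = R xs * c xs" for xs
  proof -
    have "(\<Prod>k<N. Pibar (xs!k) (xs!Suc k)) = (\<Prod>k<N. M (xs!k) (xs!Suc k)) * phi (xs!N) / (lam ^ N * phi (xs!0))"
      unfolding Pibar_def
      using prod_telescope[of "\<lambda>k. phi (xs!k)" lam "\<lambda>k. M (xs!k) (xs!Suc k)" N] phi_pos lam_pos
      by simp
    then show ?thesis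
      unfolding Q_def R_def path_measure_def c_def nubar_def
      using phin[of "xs!0"] mu0_pos[rule_format, of "xs!0"] lam_pos by (simp add: field_simps)
  qed
  have Rnn: "R xs \<ge> 0" for xs
    unfolding R_def path_measure_def
    by (intro mult_nonneg_nonneg prod_nonneg ballI) (use mu0_pos M_nonneg in \<open>auto intro: less_imp_le\<close>)
  define K where "K = (\<Sum>x\<in>UNIV. nubar x * ln (phihat x / (lam ^ N * mu0 x))) + (\<Sum>x\<in>UNIV. nubar x * ln (phi x))"
  have lnc: "(\<Sum>xs\<in>S. P xs * ln (c xs)) = K" if fP: "bridge_feasible N nubar nubar P" for P
  proof -
    have "ln (c xs) = ln (phihat (xs!0) / (lam ^ N * mu0 (xs!0))) + ln (phi (xs!N))" for xs
    proof -
      have "phihat (xs!0) / (lam ^ N * mu0 (xs!0)) > 0" using phihat_pos mu0_pos lam_pos by simp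
      moreover have "phi (xs!N) > 0" using phi_pos by simp
      ultimately show ?thesis unfolding c_def by (rule ln_mult_pos)
    qed
    then have "(\<Sum>xs\<in>S. P xs * ln (c xs)) = (\<Sum>xs\<in>S. P xs * ln (phihat (xs!0) / (lam ^ N * mu0 (xs!0)))) + (\<Sum>xs\<in>S. P xs * ln (phi (xs!N)))"
      by (simp add: distrib_left sum.distrib)
    also have "\<dots> = K"
    proof -
      have m0P: "\<forall>x. marginal N P 0 x = nubar x" and mNP: "\<forall>x. marginal N P N x = nubar x"
        using fP unfolding bridge_feasible_def by auto
      have 1: "(\<Sum>xs\<in>S. P xs * ln (phihat (xs!0) / (lam ^ N * mu0 (xs!0)))) = (\<Sum>x\<in>UNIV. ln (phihat x / (lam ^ N * mu0 x)) * nubar x)"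
        unfolding S_def using sum_marginal[of P "\<lambda>z. ln (phihat z / (lam ^ N * mu0 z))" 0 N] m0P by simp
      have 2: "(\<Sum>xs\<in>S. P xs * ln (phi (xs!N))) = (\<Sum>x\<in>UNIV. ln (phi x) * nubar x)"
        unfolding S_def using sum_marginal[of P "\<lambda>z. ln (phi z)" N N] mNP by simp
      show ?thesis unfolding 1 2 K_def
        by (intro arg_cong2[where f="(+)"] sum.cong refl) (rule mult.commute)+
    qed
    finally show ?thesis .
  qed
  have decomp: "(\<Sum>xs\<in>S. if P xs = 0 then 0 else P xs * ln (P xs / R xs))
      = (\<Sum>xs\<in>S. if P xs = 0 then 0 else P xs * ln (P xs / Q xs)) + (\<Sum>xs\<in>S. P xs * ln (c xs))"
    if ac: "\<forall>xs\<in>S. P xs \<noteq> 0 \<longrightarrow> R xs \<noteq> 0" and Pnn: "\<forall>xs\<in>S. P xs \<ge> 0" for P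
  proof -
    have "(if P xs = 0 then 0 else P xs * ln (P xs / R xs))
      = (if P xs = 0 then 0 else P xs * ln (P xs / Q xs)) + P xs * ln (c xs)" if xs: "xs \<in> S" for xs
    proof (cases "P xs = 0")
      case False
      then have p: "P xs > 0" using Pnn xs by force
      have r: "R xs > 0" using ac xs False Rnn[of xs] by force
      have "P xs / R xs = (P xs / Q xs) * c xs" using ratio[of xs] cpos[of xs] r by simp
      then have "ln (P xs / R xs) = ln (P xs / Q xs) + ln (c xs)"
      proof -
        have "P xs / Q xs > 0" using p r cpos[of xs] ratio[of xs] by simp
        then show ?thesis using \<open>P xs / R xs = (P xs / Q xs) * c xs\<close> cpos[of xs] ln_mult_pos[of "P xs / Q xs" "c xs"] by simp
      qed
      then show ?thesis using False by (simp add: distrib_left)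
    qed simp
    then show ?thesis by (simp add: sum.distrib[symmetric] cong: sum.cong)
  qed
  have QR: "\<forall>xs\<in>S. Q xs \<noteq> 0 \<longrightarrow> R xs \<noteq> 0" using ratio by simp
  have DQ: "rel_entropy S Q R = ereal K"
  proof -
    have "(\<Sum>xs\<in>S. if Q xs = 0 then 0 else Q xs * ln (Q xs / Q xs)) = 0" by (intro sum.neutral ballI) simp
    then show ?thesis unfolding rel_entropy_def
      using QR decomp[of Q] Qnn lnc[OF feasQ] by simp
  qed
  have main: "rel_entropy S P R = ereal (G + K) \<and> G \<ge> 0 \<and> (G = 0 \<longrightarrow> (\<forall>xs\<in>S. P xs = Q xs))"
    if fP: "bridge_feasible N nubar nubar P" and ac: "\<forall>xs\<in>S. P xs \<noteq> 0 \<longrightarrow> R xs \<noteq> 0"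
      and G: "G = (\<Sum>xs\<in>S. if P xs = 0 then 0 else P xs * ln (P xs / Q xs))" for P G
  proof -
    have Pnn: "\<forall>xs\<in>S. P xs \<ge> 0" and Ps: "(\<Sum>xs\<in>S. P xs) = 1"
      using fP unfolding bridge_feasible_def is_prob_on_def S_def by auto
    have acQ: "\<forall>xs\<in>S. P xs \<noteq> 0 \<longrightarrow> Q xs \<noteq> 0" using ac ratio cpos by (metis less_irrefl mult_eq_0_iff)
    have QnS: "\<forall>x\<in>S. Q x \<ge> 0" using Qnn by simp
    note g1 = gibbs(1)[OF finS Pnn QnS Ps Qsum acQ]
    note g2 = gibbs(2)[OF finS Pnn QnS Ps Qsum acQ]
    have "rel_entropy S P R = ereal (G + K)"
      using decomp[OF ac Pnn] lnc[OF fP] ac G unfolding rel_entropy_def by simp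
    moreover have "G \<ge> 0" using g1 G by simp
    moreover have "G = 0 \<longrightarrow> (\<forall>xs\<in>S. P xs = Q xs)" 
    proof
      assume "G = 0"
      then show "\<forall>xs\<in>S. P xs = Q xs" using G by (intro g2) simp
    qed
    ultimately show ?thesis by blast
  qed
  have part2: "rel_entropy S Q R \<le> rel_entropy S P R" if fP: "bridge_feasible N nubar nubar P" for P
  proof (cases "\<forall>xs\<in>S. P xs \<noteq> 0 \<longrightarrow> R xs \<noteq> 0")
    case True
    then show ?thesis using main[OF fP True refl] DQ by simp
  next
    case False
    then show ?thesis unfolding rel_entropy_def by auto
  qed
  have part3: "\<forall>xs\<in>S. P xs = Q xs"
    if fP: "bridge_feasible N nubar nubar P" and eq: "rel_entropy S P R = rel_entropy S Q R" for P
  proof (cases "\<forall>xs\<in>S. P xs \<noteq> 0 \<longrightarrow> R xs \<noteq> 0")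
    case True
    note mm = main[OF fP True refl]
    have "(\<Sum>xs\<in>S. if P xs = 0 then 0 else P xs * ln (P xs / Q xs)) = 0"
      using mm DQ eq by simp
    then show ?thesis using mm by blast
  next
    case False
    then have "rel_entropy S P R = \<infinity>" unfolding rel_entropy_def by auto
    then show ?thesis using eq DQ by simp
  qed
  show ?thesis
    using feasQ part2 part3 part4 unfolding Q_def R_def S_def by blast
qed

end
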